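(* Let $\mathcal{R}$ be any list over $[K]$ and define its attraction gap $$\Delta(\mathcal{R})=\sum_{k=1}^{K-1}\mathbb{1}\{\alpha(\mathcal{R}(k+1))-\alpha(\mathcal{R}(k))>0\}\,(\alpha(\mathcal{R}(k+1))-\alpha(\mathcal{R}(k))).$$ Then $$\sum_{k=1}^K\big(\chi(\mathcal{R}^*,k)\alpha(k)-\chi(\mathcal{R},k)\alpha(\mathcal{R}(k))\big)\le K\chi_{\max}\Delta(\mathcal{R}).$$
   Context: Items are $[K]$; a list $\mathcal{R}$ is an ordering of all $K$ items, $\mathcal{R}(k)$ being the item at position $k$. $\alpha\in[0,1]^K$ are attraction probabilities with $\alpha(1)>\dots>\alpha(K)>0$, and $\chi(\mathcal{R},k)\in[0,1]$ is the examination probability of position $k$ in list $\mathcal{R}$. $\mathcal{R}^*=(1,\dots,K)$ and $\chi_{\max}=\chi(\mathcal{R}^*,1)$. Assumed (among the paper's standing assumptions A1–A5): (A3) $\chi(\mathcal{R},k)\ge\chi(\mathcal{R},\ell)$ for $k<\ell$; (A5) $\chi(\mathcal{R},k)\ge\chi(\mathcal{R}^*,k)$ for all lists $\mathcal{R}$ and positions $k$; and also (A1) $\sum_k\chi(\mathcal{R},k)\alpha(\mathcal{R}(k))\le\sum_k\chi(\mathcal{R}^*,k)\alpha(k)$ for all $\mathcal{R}$, (A2) $\chi(\mathcal{R},k)$ depends only on the set $\{\mathcal{R}(1),\dots,\mathcal{R}(k-1)\}$, (A4) if $\mathcal{R},\mathcal{R}'$ differ only by exchanging the items at positions $k<\ell$,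 then $\alpha(\mathcal{R}(k))\le\alpha(\mathcal{R}(\ell))\iff\chi(\mathcal{R},\ell)\ge\chi(\mathcal{R}',\ell)$. *)

theory Defs
  imports Complex_Main "HOL-Combinatorics.Permutations"
begin

(* Items are {1..K}; positions are {1..K}.  A list R is a permutation of {1..K}
   (R permutes {1..K}); R k is the item at position k.  The optimal list R* is id. *)

definition attraction_gap :: "nat \<Rightarrow> (nat \<Rightarrow> real) \<Rightarrow> (nat \<Rightarrow> nat) \<Rightarrow> real" where
  "attraction_gap K \<alpha> R =
     (\<Sum>k = 1..K - 1. (if \<alpha> (R (k + 1)) - \<alpha> (R k) > 0 then 1 else 0)
                       * (\<alpha> (R (k + 1)) - \<alpha> (R k)))"

end

theory Submission
  imports Defs
begin


lemma telescope_pos: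
  fixes f :: "nat \<Rightarrow> real"
  assumes "i \<le> p"
  shows "f p - f i \<le> (\<Sum>k\<in>{i..<p}. max 0 (f (k+1) - f k))"
  using assms
proof (induction p)
  case 0 then show ?case by simp
next
  case (Suc p)
  show ?case
  proof (cases "i = Suc p")
    case True then show ?thesis by simp
  next
    case False
    then have "i \<le> p" using Suc.prems by simp
    then have "f p - f i \<le> (\<Sum>k\<in>{i..<p}. max 0 (f (k+1) - f k))" using Suc.IH by simp
    moreover have "{i..<Suc p} = insert p {i..<p}" using \<open>i \<le> p\<close> by auto
    ultimately show ?thesis by simp
  qed
qed

lemma gap_alt: "attraction_gap K \<alpha> R = (\<Sum>k = 1..K - 1. max 0 (\<alpha> (R (k + 1)) - \<alpha> (R k)))"
  unfolding attraction_gap_def by (intro sum.cong) auto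

lemma gap_nonneg: "0 \<le> attraction_gap K \<alpha> R"
  unfolding gap_alt by (intro sum_nonneg) auto

lemma exists_back:
  fixes R :: "nat \<Rightarrow> nat" and i K :: nat
  assumes R_perm: "R permutes {1..K}" and i: "1 \<le> i" "i \<le> K" and Ri: "R i > i"
  shows "\<exists>p. i < p \<and> p \<le> K \<and> R p \<le> i"
proof (rule ccontr)
  assume nt: "\<not> ?thesis"
  have h: "R p > i" if "i < p" "p \<le> K" for p
  proof (rule ccontr)
    assume "\<not> R p > i"
    then have "R p \<le> i" by simp
    then show False using nt that by blast
  qed
  have "R ` {i..K} \<subseteq> {i<..K}"
  proof
    fix y assume "y \<in> R ` {i..K}"
    then obtain p where p: "p \<in> {i..K}" "y = R p" by auto
    have "p \<in> {1..K}" using p i by auto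
    then have "R p \<in> {1..K}" by (rule permutes_in_image[OF R_perm, THEN iffD2])
    moreover have "R p > i" using h p Ri by (cases "p = i") auto
    ultimately show "y \<in> {i<..K}" using p by auto
  qed
  moreover have "inj_on R {i..K}" by (rule inj_on_subset[OF permutes_inj[OF R_perm]]) simp
  ultimately have "card {i..K} \<le> card {i<..K}" by (meson card_inj_on_le finite_greaterThanAtMost)
  then show False using i by simp
qed

theorem lemma2:
  fixes K :: nat
    and \<alpha> :: "nat \<Rightarrow> real"
    and \<chi> :: "(nat \<Rightarrow> nat) \<Rightarrow> nat \<Rightarrow> real"
    and R :: "nat \<Rightarrow> nat"
  assumes alpha_range: "\<And>i. i \<in> {1..K} \<Longrightarrow> 0 \<le> \<alpha> i \<and> \<alpha> i \<le> 1"
    and alpha_decr: "\<And>i j. 1 \<le> i \<Longrightarrow> i < j \<Longrightarrow> j \<le> K \<Longrightarrow> \<alpha> j < \<alpha> i"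
    and alpha_pos: "\<And>i. i \<in> {1..K} \<Longrightarrow> 0 < \<alpha> i"
    and chi_range: "\<And>L k. L permutes {1..K} \<Longrightarrow> k \<in> {1..K} \<Longrightarrow> 0 \<le> \<chi> L k \<and> \<chi> L k \<le> 1"
    and A1: "\<And>L. L permutes {1..K} \<Longrightarrow>
              (\<Sum>k = 1..K. \<chi> L k * \<alpha> (L k)) \<le> (\<Sum>k = 1..K. \<chi> id k * \<alpha> k)"
    and A2: "\<And>L L' k. L permutes {1..K} \<Longrightarrow> L' permutes {1..K} \<Longrightarrow> k \<in> {1..K} \<Longrightarrow>
              L ` {1..<k} = L' ` {1..<k} \<Longrightarrow> \<chi> L k = \<chi> L' k"
    and A3: "\<And>L k l. L permutes {1..K} \<Longrightarrow> 1 \<le> k \<Longrightarrow> k < l \<Longrightarrow> l \<le> K \<Longrightarrow>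
              \<chi> L l \<le> \<chi> L k"
    and A4: "\<And>L k l. L permutes {1..K} \<Longrightarrow> 1 \<le> k \<Longrightarrow> k < l \<Longrightarrow> l \<le> K \<Longrightarrow>
              (\<alpha> (L k) \<le> \<alpha> (L l) \<longleftrightarrow> \<chi> (L(k := L l, l := L k)) l \<le> \<chi> L l)"
    and A5: "\<And>L k. L permutes {1..K} \<Longrightarrow> k \<in> {1..K} \<Longrightarrow> \<chi> id k \<le> \<chi> L k"
    and R_perm: "R permutes {1..K}"
  shows "(\<Sum>k = 1..K. \<chi> id k * \<alpha> k - \<chi> R k * \<alpha> (R k))
           \<le> real K * \<chi> id 1 * attraction_gap K \<alpha> R"
  proof -
  let ?D = "attraction_gap K \<alpha> R"
  have D0: "0 \<le> ?D" by (rule gap_nonneg)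
  have idp: "id permutes {1..K}" by (rule permutes_id)
  have aweak: "\<And>a b. 1 \<le> a \<Longrightarrow> a \<le> b \<Longrightarrow> b \<le> K \<Longrightarrow> \<alpha> b \<le> \<alpha> a"
    using alpha_decr by (metis order_le_less order.refl order.strict_implies_order)
  have key: "\<alpha> i - \<alpha> (R i) \<le> ?D" if i: "i \<in> {1..K}" for i
  proof (cases "R i \<le> i")
    case True
    have "R i \<in> {1..K}" using i by (rule permutes_in_image[OF R_perm, THEN iffD2])
    then have "\<alpha> i \<le> \<alpha> (R i)" using aweak True i by auto
    then show ?thesis using D0 by linarith
  next
    case False
    then obtain p where p: "i < p" "p \<le> K" "R p \<le> i" using exists_back[OF R_perm, of i] i False by auto
    have "p \<in> {1..K}" using p i by auto
    then have "R p \<in> {1..K}" by (rule permutes_in_image[OF R_perm, THEN iffD2])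
    then have "\<alpha> i \<le> \<alpha> (R p)" using aweak p i by auto
    moreover have "\<alpha> (R p) - \<alpha> (R i) \<le> (\<Sum>k\<in>{i..<p}. max 0 (\<alpha> (R (k+1)) - \<alpha> (R k)))"
      using telescope_pos[of i p "\<lambda>k. \<alpha> (R k)"] p by simp
    moreover have "(\<Sum>k\<in>{i..<p}. max 0 (\<alpha> (R (k+1)) - \<alpha> (R k))) \<le> ?D"
      unfolding gap_alt using i p by (intro sum_mono2) auto
    ultimately show ?thesis by linarith
  qed
  have "(\<Sum>k = 1..K. \<chi> id k * \<alpha> k - \<chi> R k * \<alpha> (R k)) \<le> (\<Sum>k = 1..K. \<chi> id 1 * ?D)"
  proof (rule sum_mono)
    fix k assume k: "k \<in> {1..K}"
    have Rk: "R k \<in> {1..K}" using k by (rule permutes_in_image[OF R_perm, THEN iffD2])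
    have a1: "0 \<le> \<alpha> (R k)" using alpha_range Rk by blast
    have c1: "\<chi> id k \<le> \<chi> R k" using A5 R_perm k by blast
    have c0: "0 \<le> \<chi> id k" using chi_range idp k by blast
    have c2: "\<chi> id k \<le> \<chi> id 1"
    proof (cases "k = 1")
      case False then show ?thesis using A3[OF idp, of 1 k] k by auto
    qed simp
    have "\<chi> id k * \<alpha> k - \<chi> R k * \<alpha> (R k) \<le> \<chi> id k * (\<alpha> k - \<alpha> (R k))"
      using mult_right_mono[OF c1 a1] by (simp add: algebra_simps)
    also have "\<dots> \<le> \<chi> id k * ?D" using key[OF k] c0 by (simp add: mult_left_mono)
    also have "\<dots> \<le> \<chi> id 1 * ?D" using c2 D0 by (simp add: mult_right_mono)
    finally show "\<chi> id k * \<alpha> k - \<chi> R k * \<alpha> (R k) \<le> \<chi> id 1 * ?D" .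
  qed
  also have "\<dots> = real K * \<chi> id 1 * ?D" by simp
  finally show ?thesis .
qed

end
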